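(* In the setting below, let $0\le\ell<j\le n-1$ and assume $\Lambda_{n-\ell,n-j}(s)\le\exp(\kappa_{n-\ell,n-j}\|s\|^2/2)$ for all $s\in\mathbb R^m$. Then for every $x^{(n-\ell-1)}$, $$\Bigl\|\int_{\mathbb R^m}g_\ell^2\,\frac{\partial u_{n-\ell}}{\partial x_{n-j}}\,dp_{n-\ell}\Bigr\|\le g_{\ell+1}\Bigl(2\kappa_{n-\ell,n-j}\int_{\mathbb R^m}g_\ell^2\log(g_\ell^2/g_{\ell+1}^2)\,dp_{n-\ell}\Bigr)^{1/2},$$ where $dp_{n-\ell}=p_{n-\ell}(dx_{n-\ell}\mid x^{(n-\ell-1)})$ and $g_{\ell+1}=g_{\ell+1}(x^{(n-\ell-1)})$.
   Context: Setting: a process on $\mathbb R^m$ with conditional laws $p_i(dx_i\mid x^{(i-1)})=e^{-u_i(x^{(i)})}dx_i$ ($i=2,\dots,n$), $u_i$ continuously differentiable; $\partial/\partial x_k$ is the gradient in $x_k\in\mathbb R^m$; $\Lambda_{i,k}(s)=\sup_{x^{(i-1)}}\int\exp(\langle s,\frac{\partial u_i}{\partial x_k}(x^{(i)})\rangle)p_i(dx_i\mid x^{(i-1)})$. Given a smooth compactly supported $f:(\mathbb R^m)^n\to\mathbb R$, define $g_0=f$ and, for $i=1,\dots,n-1$, $g_i(x^{(n-i)})=\bigl(\int_{\mathbb R^m}g_{i-1}(x^{(n-i+1)})^2\,p_{n-i+1}(dx_{n-i+1}\mid x^{(n-i)})\bigr)^{1/2}$. Conventions $0\log(0/\cdot)=0$.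 *)

theory Defs
  imports "HOL-Analysis.Analysis"
begin

text \<open>A point of (R^m)^n is represented by a function x :: nat \<Rightarrow> 'a,
  'a a Euclidean space (= R^m), of which only the coordinates x 1, ..., x n matter;
  x^(i) = (x 1, ..., x i).  A function of x^(i) is a function of x depending only on
  the coordinates 1..i.  The density of p_i(. | x^(i-1)) at y is exp(- u i (x(i:=y))).\<close>

definition depends_only :: "nat \<Rightarrow> ((nat \<Rightarrow> 'a) \<Rightarrow> 'b) \<Rightarrow> bool" where
  "depends_only i h \<longleftrightarrow> (\<forall>x x'. (\<forall>k\<in>{1..i}. x k = x' k) \<longrightarrow> h x = h x')"

text \<open>Smoothness (C^infinity) of a function of x^(n): it is continuous, and all partial
  gradients in the blocks x_1..x_n exist and their components are again smooth.\<close>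
coinductive smooth_fun :: "nat \<Rightarrow> ((nat \<Rightarrow> 'a::euclidean_space) \<Rightarrow> real) \<Rightarrow> bool" where
  "\<lbrakk> continuous_on UNIV h;
     \<And>k. k \<in> {1..n} \<Longrightarrow> \<exists>D. (\<forall>x. ((\<lambda>y. h (x(k:=y))) has_derivative (\<lambda>v. D x \<bullet> v)) (at (x k)))
                              \<and> (\<forall>b\<in>Basis. smooth_fun n (\<lambda>x. D x \<bullet> b)) \<rbrakk>
   \<Longrightarrow> smooth_fun n h"

fun gfun :: "nat \<Rightarrow> (nat \<Rightarrow> (nat \<Rightarrow> 'a::euclidean_space) \<Rightarrow> real) \<Rightarrow> ((nat \<Rightarrow> 'a) \<Rightarrow> real)
              \<Rightarrow> nat \<Rightarrow> (nat \<Rightarrow> 'a) \<Rightarrow> real" where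
  "gfun n u f 0 = f"
| "gfun n u f (Suc i) = (\<lambda>x. sqrt (\<integral>y. (gfun n u f i (x(n - i := y)))\<^sup>2
                                        * exp (- u (n - i) (x(n - i := y))) \<partial>lborel))"

definition Lambda :: "(nat \<Rightarrow> (nat \<Rightarrow> 'a::euclidean_space) \<Rightarrow> real)
     \<Rightarrow> (nat \<Rightarrow> nat \<Rightarrow> (nat \<Rightarrow> 'a) \<Rightarrow> 'a) \<Rightarrow> nat \<Rightarrow> nat \<Rightarrow> 'a \<Rightarrow> ennreal" where
  "Lambda u du i k s = (SUP x. \<integral>\<^sup>+ y. ennreal (exp (s \<bullet> du i k (x(i:=y))) * exp (- u i (x(i:=y)))) \<partial>lborel)"

end

theory Submission
  imports Defs
begin


lemma dist_coord_le:
  fixes x y :: "nat \<Rightarrow> 'a::metric_space"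
  assumes "dist x y < (1/2)^(to_nat k)"
  shows "(1/2)^(to_nat k) * dist (x k) (y k) \<le> dist x y"
proof -
  have s: "summable (\<lambda>n. (1/2::real)^n * min (dist (x (from_nat n)) (y (from_nat n))) 1)"
    by (rule summable_comparison_test'[of "\<lambda>n. (1/2)^n"], auto simp add: summable_geometric_iff)
  have "(\<Sum>n\<in>{to_nat k}. (1/2::real)^n * min (dist (x (from_nat n)) (y (from_nat n))) 1)
        \<le> (\<Sum>n. (1/2)^n * min (dist (x (from_nat n)) (y (from_nat n))) 1)"
    by (rule sum_le_suminf[OF s]) auto
  hence t: "(1/2::real)^(to_nat k) * min (dist (x k) (y k)) 1 \<le> dist x y"
    unfolding dist_fun_def by simp
  show ?thesis
  proof (cases "dist (x k) (y k) \<le> 1")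
    case True then show ?thesis using t by simp
  next
    case False then show ?thesis using t assms by simp
  qed
qed

lemma dist_all_le:
  fixes x y :: "nat \<Rightarrow> 'a::metric_space"
  assumes "\<And>c. dist (x c) (y c) \<le> d"
  shows "dist x y \<le> 2 * d"
proof -
  have d0: "0 \<le> d" using assms[of 0] zero_le_dist order_trans by blast
  have s: "summable (\<lambda>n. (1/2::real)^n * min (dist (x (from_nat n)) (y (from_nat n))) 1)"
    by (rule summable_comparison_test'[of "\<lambda>n. (1/2)^n"], auto simp add: summable_geometric_iff)
  have s2: "summable (\<lambda>n. (1/2::real)^n * d)"
    by (intro summable_mult2) (auto simp add: summable_geometric_iff)
  have "dist x y \<le> (\<Sum>n. (1/2::real)^n * d)"
    unfolding dist_fun_def
    by (rule suminf_le[OF _ s s2]) (auto intro!: mult_left_mono min.coboundedI1 assms)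
  also have "\<dots> = 2 * d"
    using suminf_geometric[of "1/2::real"] suminf_mult2[of "\<lambda>n. (1/2::real)^n" d] 
    by (simp add: summable_geometric_iff)
  finally show ?thesis .
qed

lemma cont_upd: "continuous_on UNIV (\<lambda>p::(nat \<Rightarrow> 'a::topological_space) \<times> 'a. (fst p)(k := snd p))"
proof (rule continuous_on_coordinatewise_then_product)
  fix c
  show "continuous_on UNIV (\<lambda>p::(nat \<Rightarrow> 'a) \<times> 'a. ((fst p)(k := snd p)) c)"
  proof (cases "c = k")
    case True then show ?thesis by (simp add: continuous_on_snd)
  next
    case False
    have "continuous_on UNIV (\<lambda>p::(nat \<Rightarrow> 'a) \<times> 'a. fst p c)"
      by (rule continuous_on_compose2[OF continuous_on_product_coordinates continuous_on_fst]) auto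
    then show ?thesis using False by simp
  qed
qed

lemma cont_upd1: "continuous_on UNIV (\<lambda>y::'a::topological_space. (x::nat \<Rightarrow> 'a)(k := y))"
proof -
  have "continuous_on UNIV (\<lambda>y::'a. (x, y))" by (auto intro!: continuous_intros)
  from continuous_on_compose2[OF cont_upd this] show ?thesis by simp
qed



lemma depends_onlyD: "depends_only i h \<Longrightarrow> (\<And>k. k \<in> {1..i} \<Longrightarrow> x k = x' k) \<Longrightarrow> h x = h x'"
  unfolding depends_only_def by blast

lemma cont_partial:
  fixes U :: "(nat \<Rightarrow> 'a::euclidean_space) \<Rightarrow> real" and D :: "nat \<Rightarrow> (nat \<Rightarrow> 'a) \<Rightarrow> 'a"
  assumes dep: "depends_only i U"
   and der: "\<And>k x. k \<in> {1..i} \<Longrightarrow> ((\<lambda>y. U (x(k:=y))) has_derivative (\<lambda>v. D k x \<bullet> v)) (at (x k))"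
   and cont: "\<And>k. k \<in> {1..i} \<Longrightarrow> continuous_on UNIV (D k)"
  shows "continuous_on UNIV U"
  unfolding continuous_on_iff
proof (intro ballI allI impI)
  fix x0 :: "nat \<Rightarrow> 'a" and e :: real
  assume e: "e > 0"
  define N where "N = (\<lambda>w. \<Sum>k\<in>{1..i}. norm (D k w))"
  define B where "B = N x0 + 1"
  have B0: "B > 0" unfolding B_def N_def by (simp add: add_nonneg_pos sum_nonneg)
  have Ncont: "continuous_on UNIV N" unfolding N_def
    by (intro continuous_on_sum continuous_on_norm cont) 
  obtain d where d: "d > 0" "\<And>w. dist w x0 < d \<Longrightarrow> dist (N w) (N x0) < 1"
    using Ncont unfolding continuous_on_iff by (meson UNIV_I zero_less_one)
  define \<delta> where "\<delta> = d / 3"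
  have \<delta>0: "\<delta> > 0" using d unfolding \<delta>_def by simp
  have Dbound: "norm (D k w) \<le> B" if "\<And>c. dist (w c) (x0 c) \<le> \<delta>" "k \<in> {1..i}" for w k
  proof -
    have "dist w x0 \<le> 2 * \<delta>" by (rule dist_all_le) (use that in auto)
    hence "dist w x0 < d" using \<delta>0 unfolding \<delta>_def by simp
    hence "N w < B" using d(2)[of w] unfolding B_def dist_real_def by linarith
    moreover have "norm (D k w) \<le> N w" unfolding N_def
      by (rule member_le_sum) (use that in auto)
    ultimately show ?thesis by simp
  qed
  define tr where "tr = (\<lambda>k (x::nat \<Rightarrow> 'a). (\<lambda>c. if c \<in> {1..k} then x c else x0 c))"
  have step2: "k \<le> i \<Longrightarrow> (\<And>c. dist (x c) (x0 c) \<le> \<delta>) \<Longrightarrow>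
      \<bar>U (tr k x) - U x0\<bar> \<le> B * (\<Sum>c\<in>{1..k}. norm (x c - x0 c))" for k x
  proof (induction k)
    case 0
    have "tr 0 x = x0" unfolding tr_def by auto
    then show ?case by simp
  next
    case (Suc k)
    define z where "z = tr k x"
    have z1: "tr (Suc k) x = z(Suc k := x (Suc k))" unfolding z_def tr_def by auto
    have z0: "z = z(Suc k := x0 (Suc k))" unfolding z_def tr_def by auto
    have ki: "Suc k \<in> {1..i}" using Suc.prems by auto
    define S where "S = cball (x0 (Suc k)) \<delta>"
    have "norm ((\<lambda>y. U (z(Suc k := y))) (x (Suc k)) - (\<lambda>y. U (z(Suc k := y))) (x0 (Suc k)))
          \<le> B * norm (x (Suc k) - x0 (Suc k))"
    proof (rule differentiable_bound[where S=S and f'="\<lambda>y v. D (Suc k) (z(Suc k := y)) \<bullet> v"])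
      show "convex S" unfolding S_def by simp
      show "x (Suc k) \<in> S" "x0 (Suc k) \<in> S" unfolding S_def using Suc.prems \<delta>0
        by (auto simp: dist_commute less_imp_le)
      fix y assume y: "y \<in> S"
      have "((\<lambda>y'. U ((z(Suc k := y))(Suc k := y'))) has_derivative (\<lambda>v. D (Suc k) (z(Suc k := y)) \<bullet> v))
              (at ((z(Suc k := y)) (Suc k)))"
        by (rule der[OF ki])
      then show "((\<lambda>y. U (z(Suc k := y))) has_derivative (\<lambda>v. D (Suc k) (z(Suc k := y)) \<bullet> v)) (at y within S)"
        by (simp add: has_derivative_at_withinI)
      have cl: "dist ((z(Suc k := y)) c) (x0 c) \<le> \<delta>" for c
        using y Suc.prems(2)[of c] \<delta>0 unfolding S_def z_def tr_def by (auto simp: dist_commute)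
      show "onorm (\<lambda>v. D (Suc k) (z(Suc k := y)) \<bullet> v) \<le> B"
      proof (rule onorm_bound)
        show "0 \<le> B" using B0 by simp
        fix v
        have "norm (D (Suc k) (z(Suc k := y)) \<bullet> v) \<le> norm (D (Suc k) (z(Suc k := y))) * norm v"
          unfolding real_norm_def by (rule Cauchy_Schwarz_ineq2)
        also have "\<dots> \<le> B * norm v" by (rule mult_right_mono[OF Dbound[of "z(Suc k := y)", OF cl ki] norm_ge_zero])
        finally show "norm (D (Suc k) (z(Suc k := y)) \<bullet> v) \<le> B * norm v" .
      qed
    qed
    hence A: "\<bar>U (tr (Suc k) x) - U z\<bar> \<le> B * norm (x (Suc k) - x0 (Suc k))"
      using z1 z0 by (metis real_norm_def)
    have IH: "\<bar>U z - U x0\<bar> \<le> B * (\<Sum>c\<in>{1..k}. norm (x c - x0 c))"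
      unfolding z_def using Suc by simp
    have "(\<Sum>c\<in>{1..Suc k}. norm (x c - x0 c)) = (\<Sum>c\<in>{1..k}. norm (x c - x0 c)) + norm (x (Suc k) - x0 (Suc k))"
      by simp
    then show ?case using A IH by (simp add: distrib_left)
  qed
  define \<eta> where "\<eta> = min \<delta> (e / (2 * B * (real i + 1)))"
  have \<eta>0: "\<eta> > 0" unfolding \<eta>_def using \<delta>0 e B0 by simp
  define d' where "d' = min (1/2) \<eta> * (1/2) ^ (Max (to_nat ` {1..i}))"
  have d'0: "d' > 0" unfolding d'_def using \<eta>0 by simp
  show "\<exists>d>0. \<forall>x'\<in>UNIV. dist x' x0 < d \<longrightarrow> dist (U x') (U x0) < e"
  proof (intro exI[of _ d'] conjI ballI impI d'0)
    fix x assume dx: "dist x x0 < d'"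
    have ck: "dist (x k) (x0 k) < \<eta>" if k: "k \<in> {1..i}" for k
    proof -
      have "to_nat k \<le> Max (to_nat ` {1..i})" using k by auto
      hence p: "(1/2::real) ^ (Max (to_nat ` {1..i})) \<le> (1/2) ^ (to_nat k)"
        by (intro power_decreasing) auto
      have "d' \<le> min (1/2) \<eta> * (1/2) ^ (to_nat k)" unfolding d'_def
        using p \<eta>0 by (intro mult_left_mono) auto
      hence lt: "dist x x0 < min (1/2) \<eta> * (1/2) ^ (to_nat k)" using dx by simp
      hence "dist x x0 < (1/2) ^ (to_nat k)"
      proof -
        have "min (1/2) \<eta> * (1/2::real) ^ (to_nat k) \<le> 1 * (1/2) ^ (to_nat k)"
          by (intro mult_right_mono) auto
        then show ?thesis using lt by linarith
      qed
      from dist_coord_le[OF this] lt have "(1/2) ^ (to_nat k) * dist (x k) (x0 k) < (1/2) ^ (to_nat k) * min (1/2) \<eta>"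
        by (simp only: mult.commute[of "min (1/2) \<eta>"])
      hence "dist (x k) (x0 k) < min (1/2) \<eta>" by (subst (asm) mult_less_cancel_left_pos) auto
      then show ?thesis by simp
    qed
    define x' where "x' = tr i x"
    have "U x = U x'" by (rule depends_onlyD[OF dep]) (simp add: x'_def tr_def)
    have cx: "dist (x c) (x0 c) \<le> \<delta>" if "c \<in> {1..i}" for c
      using ck[OF that] unfolding \<eta>_def by simp
    define x2 where "x2 = (\<lambda>c. if c \<in> {1..i} then x c else x0 c)"
    have "x' = tr i x2" unfolding x'_def x2_def tr_def by auto
    have "\<bar>U (tr i x2) - U x0\<bar> \<le> B * (\<Sum>c\<in>{1..i}. norm (x2 c - x0 c))"
      by (rule step2) (auto simp: x2_def cx less_imp_le \<delta>0)
    also have "\<dots> \<le> B * (\<Sum>c\<in>{1..i}. \<eta>)"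
    proof (intro mult_left_mono sum_mono)
      fix c assume c: "c \<in> {1..i}"
      have "norm (x2 c - x0 c) = dist (x c) (x0 c)" using c by (simp add: x2_def dist_norm)
      then show "norm (x2 c - x0 c) \<le> \<eta>" using ck[OF c] by linarith
    qed (use B0 in simp)
    also have "\<dots> = B * real i * \<eta>" by simp
    also have "\<dots> \<le> B * real i * (e / (2 * B * (real i + 1)))"
      unfolding \<eta>_def using B0 by (intro mult_left_mono) auto
    also have "\<dots> = e * (real i / (2 * (real i + 1)))"
    proof -
      have "B * 2 + B * (real i * 2) > 0" using B0 by (intro add_pos_nonneg) auto
      hence "B * 2 + B * (real i * 2) \<noteq> 0" by simp
      then show ?thesis using B0 by (simp add: field_simps)
    qed
    also have "\<dots> < e * 1" using e by (intro mult_strict_left_mono) (auto simp: field_simps)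
    also have "\<dots> = e" by simp
    finally show "dist (U x) (U x0) < e"
      using \<open>U x = U x'\<close> \<open>x' = tr i x2\<close> by (simp add: dist_real_def)
  qed
qed



lemma young_ineq:
  fixes Z h b :: real
  assumes Z: "Z > 0" and h: "h \<ge> 0"
  shows "h * b \<le> h * ln (h / Z) - h + Z * exp b"
proof (cases "h = 0")
  case True then show ?thesis using Z by simp
next
  case False
  hence hp: "h > 0" using h by simp
  define a where "a = h / Z"
  have ap: "a > 0" unfolding a_def using hp Z by simp
  have "exp b = exp (ln a) * exp (b - ln a)" by (simp add: exp_diff)
  also have "\<dots> = a * exp (b - ln a)" using ap by simp
  finally have eb: "exp b = a * exp (b - ln a)" .
  have "1 + (b - ln a) \<le> exp (b - ln a)" by (rule exp_ge_add_one_self)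
  hence "a * (1 + (b - ln a)) \<le> exp b" using eb ap by simp
  hence "Z * (a * (1 + (b - ln a))) \<le> Z * exp b" using Z by simp
  moreover have "Z * a = h" unfolding a_def using Z by simp
  ultimately have "h * (1 + (b - ln a)) \<le> Z * exp b" by (simp add: mult.assoc[symmetric])
  then show ?thesis unfolding a_def by (simp add: algebra_simps)
qed

lemma ent_bound:
  fixes Z h M :: real
  assumes Z: "Z > 0" and h: "0 \<le> h" "h \<le> M"
  shows "\<bar>h * ln (h / Z)\<bar> \<le> M * M / Z + Z"
proof (cases "h = 0")
  case True then show ?thesis using Z h by simp
next
  case False
  hence hp: "h > 0" using h by simp
  have q: "h / Z > 0" using hp Z by simp
  have up: "ln (h / Z) \<le> h / Z - 1" using ln_le_minus_one[OF q] .
  have "h * ln (h / Z) \<le> h * (h / Z - 1)" using up hp by (intro mult_left_mono) auto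
  also have "\<dots> \<le> h * h / Z" using hp by (simp add: field_simps)
  also have "\<dots> \<le> M * M / Z" using h Z by (intro divide_right_mono mult_mono) auto
  finally have u: "h * ln (h / Z) \<le> M * M / Z" .
  have q2: "Z / h > 0" using hp Z by simp
  have "ln (Z / h) \<le> Z / h - 1" using ln_le_minus_one[OF q2] .
  moreover have "ln (h / Z) = - ln (Z / h)" using hp Z by (simp add: ln_div)
  ultimately have "ln (h / Z) \<ge> 1 - Z / h" by simp
  hence "h * ln (h / Z) \<ge> h * (1 - Z / h)" using hp by (intro mult_left_mono) auto
  also have "h * (1 - Z / h) = h - Z" using hp by (simp add: field_simps)
  finally have l: "h * ln (h / Z) \<ge> h - Z" .
  have "M * M / Z \<ge> 0" using h Z by simp
  then show ?thesis unfolding abs_le_iff using u l hp Z by linarith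
qed

lemma ent_lower:
  fixes Z h :: real
  assumes Z: "Z > 0" and h: "0 \<le> h"
  shows "h - Z \<le> h * ln (h / Z)"
proof (cases "h = 0")
  case True then show ?thesis using Z by simp
next
  case False
  hence hp: "h > 0" using h by simp
  have q2: "Z / h > 0" using hp Z by simp
  have "ln (Z / h) \<le> Z / h - 1" using ln_le_minus_one[OF q2] .
  moreover have "ln (h / Z) = - ln (Z / h)" using hp Z by (simp add: ln_div)
  ultimately have "ln (h / Z) \<ge> 1 - Z / h" by simp
  hence "h * ln (h / Z) \<ge> h * (1 - Z / h)" using hp by (intro mult_left_mono) auto
  also have "h * (1 - Z / h) = h - Z" using hp by (simp add: field_simps)
  finally show ?thesis .
qed

lemma abs_le_exp_sum: "\<bar>t::real\<bar> \<le> exp t + exp (- t)"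
proof -
  have "1 + t \<le> exp t" "1 + (-t) \<le> exp (-t)" by (rule exp_ge_add_one_self)+
  moreover have "exp t > 0" "exp (-t) > 0" by simp_all
  ultimately show ?thesis by linarith
qed

lemma main_abs:
  fixes h w :: "'a::euclidean_space \<Rightarrow> real" and V :: "'a \<Rightarrow> 'a" and \<kappa> M :: real
  assumes hm: "h \<in> borel_measurable lborel" and h0: "\<And>y. 0 \<le> h y" and hM: "\<And>y. h y \<le> M"
    and wm: "w \<in> borel_measurable lborel" and w0: "\<And>y. 0 \<le> w y"
    and w1: "(\<integral>\<^sup>+y. ennreal (w y) \<partial>lborel) = 1"
    and Vm: "V \<in> borel_measurable lborel"
    and sg: "\<And>s. (\<integral>\<^sup>+y. ennreal (exp (s \<bullet> V y) * w y) \<partial>lborel) \<le> ennreal (exp (\<kappa> * (norm s)\<^sup>2 / 2))"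
  shows "norm (\<integral>y. (h y * w y) *\<^sub>R V y \<partial>lborel)
    \<le> sqrt (\<integral>y. h y * w y \<partial>lborel) *
       sqrt (2 * \<kappa> * (\<integral>y. h y * ln (h y / (sqrt (\<integral>y. h y * w y \<partial>lborel))\<^sup>2) * w y \<partial>lborel))"
proof -
  have M0: "0 \<le> M" using h0[of 0] hM[of 0] by linarith
  have wi: "integrable lborel w"
    by (rule integrableI_nonneg) (use wm w0 w1 in auto)
  have wint: "(\<integral>y. w y \<partial>lborel) = 1"
    using integral_eq_nn_integral[OF wm] w0 w1 by simp
  have Em: "(\<lambda>y. exp (s \<bullet> V y) * w y) \<in> borel_measurable lborel" for s
    using Vm wm by measurable
  have Ei: "integrable lborel (\<lambda>y. exp (s \<bullet> V y) * w y)" for s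
  proof (rule integrableI_nonneg)
    show "(\<integral>\<^sup>+y. ennreal (exp (s \<bullet> V y) * w y) \<partial>lborel) < \<infinity>"
      by (rule le_less_trans[OF sg]) simp
  qed (use Em w0 in auto)
  have Eint: "(\<integral>y. exp (s \<bullet> V y) * w y \<partial>lborel) \<le> exp (\<kappa> * (norm s)\<^sup>2 / 2)" for s
  proof -
    have "(\<integral>y. exp (s \<bullet> V y) * w y \<partial>lborel) = enn2real (\<integral>\<^sup>+y. ennreal (exp (s \<bullet> V y) * w y) \<partial>lborel)"
      by (rule integral_eq_nn_integral) (use Em w0 in auto)
    also have "\<dots> \<le> enn2real (ennreal (exp (\<kappa> * (norm s)\<^sup>2 / 2)))"
      by (rule enn2real_mono[OF sg]) simp
    finally show ?thesis by simp
  qed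
  have wVm: "(\<lambda>y. w y *\<^sub>R V y) \<in> borel_measurable lborel" using wm Vm by measurable
  have wVi: "integrable lborel (\<lambda>y. w y *\<^sub>R V y)"
  proof (rule Bochner_Integration.integrable_bound)
    show "integrable lborel (\<lambda>y. \<Sum>b\<in>Basis. exp (b \<bullet> V y) * w y + exp ((- b) \<bullet> V y) * w y)"
      by (rule Bochner_Integration.integrable_sum, rule Bochner_Integration.integrable_add, rule Ei, rule Ei)
    show "AE y in lborel. norm (w y *\<^sub>R V y) \<le> norm (\<Sum>b\<in>Basis. exp (b \<bullet> V y) * w y + exp ((- b) \<bullet> V y) * w y)"
    proof (intro AE_I2)
      fix y
      have "norm (w y *\<^sub>R V y) = w y * norm (V y)" using w0[of y] by simp
      also have "\<dots> \<le> w y * (\<Sum>b\<in>Basis. \<bar>V y \<bullet> b\<bar>)"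
        by (intro mult_left_mono norm_le_l1 w0)
      also have "\<dots> \<le> w y * (\<Sum>b\<in>Basis. exp (b \<bullet> V y) + exp ((- b) \<bullet> V y))"
      proof (intro mult_left_mono sum_mono w0)
        fix b :: 'a
        show "\<bar>V y \<bullet> b\<bar> \<le> exp (b \<bullet> V y) + exp ((- b) \<bullet> V y)"
          using abs_le_exp_sum[of "b \<bullet> V y"] by (simp add: inner_commute)
      qed
      also have "\<dots> = (\<Sum>b\<in>Basis. exp (b \<bullet> V y) * w y + exp ((- b) \<bullet> V y) * w y)"
        by (simp add: sum_distrib_left algebra_simps)
      also have "\<dots> \<le> norm (\<Sum>b\<in>Basis. exp (b \<bullet> V y) * w y + exp ((- b) \<bullet> V y) * w y)"
        by simp
      finally show "norm (w y *\<^sub>R V y) \<le> norm (\<Sum>b\<in>Basis. exp (b \<bullet> V y) * w y + exp ((- b) \<bullet> V y) * w y)" .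
    qed
  qed (rule wVm)
  have I1: "integrable lborel (\<lambda>y. h y * w y)"
  proof (rule Bochner_Integration.integrable_bound)
    show "integrable lborel (\<lambda>y. M * w y)" using wi by simp
    show "AE y in lborel. norm (h y * w y) \<le> norm (M * w y)"
      using h0 hM w0 M0 by (intro AE_I2) (simp add: abs_mult mult_right_mono)
  qed (use hm wm in measurable)
  have I2: "integrable lborel (\<lambda>y. (h y * w y) *\<^sub>R V y)"
  proof (rule Bochner_Integration.integrable_bound)
    show "integrable lborel (\<lambda>y. M * norm (w y *\<^sub>R V y))" by (intro integrable_mult_right integrable_norm wVi)
    show "AE y in lborel. norm ((h y * w y) *\<^sub>R V y) \<le> norm (M * norm (w y *\<^sub>R V y))"
    proof (intro AE_I2)
      fix y
      have "norm ((h y * w y) *\<^sub>R V y) = h y * norm (w y *\<^sub>R V y)"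
        using h0[of y] w0[of y] by (simp add: abs_mult)
      also have "\<dots> \<le> M * norm (w y *\<^sub>R V y)" using hM[of y] by (intro mult_right_mono) auto
      finally show "norm ((h y * w y) *\<^sub>R V y) \<le> norm (M * norm (w y *\<^sub>R V y))" by simp
    qed
  qed (use hm wm Vm in measurable)
  define Z where "Z = (\<integral>y. h y * w y \<partial>lborel)"
  define A where "A = (\<integral>y. (h y * w y) *\<^sub>R V y \<partial>lborel)"
  have Z0: "Z \<ge> 0" unfolding Z_def using h0 w0 by (intro integral_nonneg_AE AE_I2) simp
  have sqZ: "(sqrt Z)\<^sup>2 = Z" using Z0 by simp
  show ?thesis
  proof (cases "Z = 0")
    case True
    have "AE y in lborel. h y * w y = 0"
      using True I1 h0 w0 unfolding Z_def by (subst (asm) integral_nonneg_eq_0_iff_AE) auto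
    hence "A = 0" unfolding A_def by (intro integral_eq_zero_AE) (auto elim: AE_mp)
    then show ?thesis using True unfolding A_def Z_def by simp
  next
    case False
    hence Zp: "Z > 0" using Z0 by simp
    define E where "E = (\<integral>y. h y * ln (h y / Z) * w y \<partial>lborel)"
    have I4: "integrable lborel (\<lambda>y. h y * ln (h y / Z) * w y)"
    proof (rule Bochner_Integration.integrable_bound)
      show "integrable lborel (\<lambda>y. (M * M / Z + Z) * w y)" using wi by simp
      show "AE y in lborel. norm (h y * ln (h y / Z) * w y) \<le> norm ((M * M / Z + Z) * w y)"
      proof (intro AE_I2)
        fix y
        have "norm (h y * ln (h y / Z) * w y) = \<bar>h y * ln (h y / Z)\<bar> * w y"
          using w0[of y] by (simp add: abs_mult)
        also have "\<dots> \<le> (M * M / Z + Z) * w y"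
          by (intro mult_right_mono ent_bound[OF Zp h0 hM] w0)
        finally show "norm (h y * ln (h y / Z) * w y) \<le> norm ((M * M / Z + Z) * w y)" by simp
      qed
    qed (use hm wm in measurable)
    have E0: "E \<ge> 0"
    proof -
      have "(\<integral>y. (h y - Z) * w y \<partial>lborel) \<le> E" unfolding E_def
      proof (rule integral_mono[OF _ I4])
        show "integrable lborel (\<lambda>y. (h y - Z) * w y)"
          using I1 wi by (simp add: left_diff_distrib)
        fix y show "(h y - Z) * w y \<le> h y * ln (h y / Z) * w y"
          by (intro mult_right_mono ent_lower[OF Zp h0] w0)
      qed
      moreover have "(\<integral>y. (h y - Z) * w y \<partial>lborel) = 0"
        using I1 wi wint unfolding Z_def by (simp add: left_diff_distrib)
      ultimately show ?thesis by simp
    qed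
    have k0: "\<kappa> \<ge> 0"
    proof -
      obtain b :: 'a where b: "b \<in> Basis" using nonempty_Basis by blast
      have nb: "norm b = 1" "norm (- b) = 1" using b by auto
      have "2 * (\<integral>y. w y \<partial>lborel) \<le> (\<integral>y. exp (b \<bullet> V y) * w y + exp ((- b) \<bullet> V y) * w y \<partial>lborel)"
      proof -
        have "2 * (\<integral>y. w y \<partial>lborel) = (\<integral>y. 2 * w y \<partial>lborel)" by simp
        also have "\<dots> \<le> (\<integral>y. exp (b \<bullet> V y) * w y + exp ((- b) \<bullet> V y) * w y \<partial>lborel)"
        proof (rule integral_mono)
          show "integrable lborel (\<lambda>y. 2 * w y)" using wi by simp
          show "integrable lborel (\<lambda>y. exp (b \<bullet> V y) * w y + exp ((- b) \<bullet> V y) * w y)"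
            by (rule Bochner_Integration.integrable_add[OF Ei Ei])
          fix y
          have "2 \<le> exp (b \<bullet> V y) + exp (- (b \<bullet> V y))"
            using exp_ge_add_one_self[of "b \<bullet> V y"] exp_ge_add_one_self[of "- (b \<bullet> V y)"] by linarith
          hence "2 \<le> exp (b \<bullet> V y) + exp ((- b) \<bullet> V y)" by (simp only: inner_minus_left)
          hence "2 * w y \<le> (exp (b \<bullet> V y) + exp ((- b) \<bullet> V y)) * w y" by (intro mult_right_mono w0)
          then show "2 * w y \<le> exp (b \<bullet> V y) * w y + exp ((- b) \<bullet> V y) * w y" by (simp add: algebra_simps)
        qed
        finally show ?thesis .
      qed
      also have "\<dots> = (\<integral>y. exp (b \<bullet> V y) * w y \<partial>lborel) + (\<integral>y. exp ((- b) \<bullet> V y) * w y \<partial>lborel)"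
        by (rule Bochner_Integration.integral_add[OF Ei Ei])
      also have "\<dots> \<le> exp (\<kappa> * (norm b)\<^sup>2 / 2) + exp (\<kappa> * (norm (- b))\<^sup>2 / 2)"
        by (intro add_mono Eint)
      finally have "2 \<le> 2 * exp (\<kappa> / 2)" using wint nb by simp
      hence "1 \<le> exp (\<kappa> / 2)" by simp
      then show ?thesis by simp
    qed
    show ?thesis
    proof (cases "A = 0")
      case True
      have "0 \<le> sqrt Z * sqrt (2 * \<kappa> * E)" using Z0 E0 k0 by simp
      then show ?thesis using True unfolding Z_def[symmetric] sqZ A_def[symmetric] E_def[symmetric] by simp
    next
      case Anz: False
      have key: "t * norm A \<le> E + Z * (\<kappa> * t\<^sup>2 / 2)" if tp: "t > 0" for t
      proof -
        define s where "s = (t / norm A) *\<^sub>R A"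
        define c where "c = \<kappa> * t\<^sup>2 / 2"
        have ns: "norm s = t" unfolding s_def using tp Anz by simp
        have sA: "s \<bullet> A = t * norm A" unfolding s_def using Anz
          by (simp add: power2_norm_eq_inner[symmetric] power2_eq_square)
        have pw: "s \<bullet> ((h y * w y) *\<^sub>R V y) - c * (h y * w y)
                  \<le> h y * ln (h y / Z) * w y - h y * w y + (Z * exp (- c)) * (exp (s \<bullet> V y) * w y)" for y
        proof -
          have "h y * (s \<bullet> V y - c) \<le> h y * ln (h y / Z) - h y + Z * exp (s \<bullet> V y - c)"
            by (rule young_ineq[OF Zp h0])
          hence "(h y * (s \<bullet> V y - c)) * w y \<le> (h y * ln (h y / Z) - h y + Z * exp (s \<bullet> V y - c)) * w y"
            by (intro mult_right_mono w0)
          moreover have "exp (s \<bullet> V y - c) = exp (- c) * exp (s \<bullet> V y)" by (simp add: exp_diff exp_minus field_simps)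
          ultimately show ?thesis by (simp add: algebra_simps)
        qed
        have "(\<integral>y. s \<bullet> ((h y * w y) *\<^sub>R V y) - c * (h y * w y) \<partial>lborel)
              \<le> (\<integral>y. h y * ln (h y / Z) * w y - h y * w y + (Z * exp (- c)) * (exp (s \<bullet> V y) * w y) \<partial>lborel)"
          by (intro integral_mono pw Bochner_Integration.integrable_diff Bochner_Integration.integrable_add integrable_mult_right I1 I2 I4 Ei
                integrable_inner_right)
        also have "\<dots> = E - Z + (Z * exp (- c)) * (\<integral>y. exp (s \<bullet> V y) * w y \<partial>lborel)"
        proof -
          have i1: "(\<integral>y. h y * ln (h y / Z) * w y - h y * w y + (Z * exp (- c)) * (exp (s \<bullet> V y) * w y) \<partial>lborel)
             = (\<integral>y. h y * ln (h y / Z) * w y - h y * w y \<partial>lborel) + (\<integral>y. (Z * exp (- c)) * (exp (s \<bullet> V y) * w y) \<partial>lborel)"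
            by (rule Bochner_Integration.integral_add) (intro Bochner_Integration.integrable_diff I1 I4, intro integrable_mult_right Ei)
          have i2: "(\<integral>y. h y * ln (h y / Z) * w y - h y * w y \<partial>lborel) = E - Z"
            unfolding E_def Z_def by (rule Bochner_Integration.integral_diff[OF I4[unfolded Z_def] I1])
          show ?thesis unfolding i1 i2 by (simp only: integral_mult_right_zero)
        qed
        also have "\<dots> \<le> E - Z + (Z * exp (- c)) * exp (\<kappa> * (norm s)\<^sup>2 / 2)"
          using Zp by (intro add_left_mono mult_left_mono Eint) auto
        also have "\<dots> = E" unfolding c_def ns by (simp add: exp_minus field_simps)
        finally have le: "(\<integral>y. s \<bullet> ((h y * w y) *\<^sub>R V y) - c * (h y * w y) \<partial>lborel) \<le> E" .
        have "(\<integral>y. s \<bullet> ((h y * w y) *\<^sub>R V y) - c * (h y * w y) \<partial>lborel) = s \<bullet> A - c * Z"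
        proof -
          have "(\<integral>y. s \<bullet> ((h y * w y) *\<^sub>R V y) - c * (h y * w y) \<partial>lborel)
               = (\<integral>y. s \<bullet> ((h y * w y) *\<^sub>R V y) \<partial>lborel) - (\<integral>y. c * (h y * w y) \<partial>lborel)"
            by (rule Bochner_Integration.integral_diff) (intro integrable_inner_right I2, intro integrable_mult_right I1)
          also have "\<dots> = s \<bullet> A - c * Z" unfolding A_def Z_def
            by (simp only: integral_mult_right_zero integral_inner_right[OF I2])
          finally show ?thesis .
        qed
        then show ?thesis using le sA unfolding c_def by (simp add: algebra_simps)
      qed
      have nA: "norm A > 0" using Anz by simp
      have kpos: "\<kappa> > 0"
      proof (rule ccontr)
        assume "\<not> \<kappa> > 0"
        define t where "t = (\<bar>E\<bar> + 1) / norm A"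
        have tp: "t > 0" unfolding t_def using nA by simp
        have "t * norm A = \<bar>E\<bar> + 1" unfolding t_def using nA by simp
        moreover have "Z * (\<kappa> * t\<^sup>2 / 2) \<le> 0"
          using Zp \<open>\<not> \<kappa> > 0\<close> by (intro mult_nonneg_nonpos) (auto intro!: divide_nonpos_pos mult_nonpos_nonneg)
        ultimately show False using key[OF tp] by linarith
      qed
      define t where "t = norm A / (\<kappa> * Z)"
      have tp: "t > 0" unfolding t_def using nA kpos Zp by simp
      have "t * norm A = (norm A)\<^sup>2 / (\<kappa> * Z)" unfolding t_def by (simp add: power2_eq_square)
      moreover have "Z * (\<kappa> * t\<^sup>2 / 2) = (norm A)\<^sup>2 / (\<kappa> * Z) / 2"
        unfolding t_def using kpos Zp by (simp add: power2_eq_square field_simps)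
      ultimately have "(norm A)\<^sup>2 / (\<kappa> * Z) / 2 \<le> E" using key[OF tp] by simp
      hence "(norm A)\<^sup>2 \<le> 2 * \<kappa> * Z * E" using kpos Zp by (simp add: field_simps)
      hence "norm A \<le> sqrt (Z * (2 * \<kappa> * E))"
        by (metis mult.commute mult.left_commute norm_ge_zero real_le_rsqrt)
      also have "\<dots> = sqrt Z * sqrt (2 * \<kappa> * E)" by (rule real_sqrt_mult)
      finally show ?thesis unfolding Z_def[symmetric] sqZ A_def[symmetric] E_def[symmetric] .
    qed
  qed
qed



lemma upd_meas: "(\<lambda>y. (x::nat \<Rightarrow> 'a::euclidean_space)(k := y)) \<in> borel_measurable lborel"
  unfolding measurable_lborel2 by (rule borel_measurable_continuous_onI[OF cont_upd1])

lemma f_bounded: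
  fixes f :: "(nat \<Rightarrow> 'a::euclidean_space) \<Rightarrow> real"
  assumes fc: "continuous_on UNIV f" and dep: "depends_only n f"
    and supp: "\<exists>R. \<forall>x. f x \<noteq> 0 \<longrightarrow> (\<forall>k\<in>{1..n}. norm (x k) \<le> R)"
  shows "\<exists>M. \<forall>x. \<bar>f x\<bar> \<le> M"
proof -
  obtain R where R: "\<And>x. f x \<noteq> 0 \<Longrightarrow> \<forall>k\<in>{1..n}. norm (x k) \<le> R" using supp by blast
  define S where "S = (\<lambda>c::nat. if c \<in> {1..n} then cball (0::'a) R else {0})"
  define K where "K = PiE UNIV S"
  have "compactin (product_topology (\<lambda>i. euclidean) UNIV) K"
    unfolding K_def by (subst compactin_PiE) (auto simp: S_def)
  hence cK: "compact K" by (simp add: euclidean_product_topology)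
  have "compact (f ` K)" by (rule compact_continuous_image[OF continuous_on_subset[OF fc] cK]) simp
  then obtain B where B: "\<And>y. y \<in> f ` K \<Longrightarrow> norm y \<le> B"
    using compact_imp_bounded bounded_iff by metis
  show ?thesis
  proof (intro exI allI)
    fix x
    show "\<bar>f x\<bar> \<le> max B 0"
    proof (cases "f x = 0")
      case True then show ?thesis by simp
    next
      case False
      define x' where "x' = (\<lambda>c. if c \<in> {1..n} then x c else 0)"
      have "f x = f x'" by (rule depends_onlyD[OF dep]) (simp add: x'_def)
      moreover have "x' \<in> K" unfolding K_def S_def x'_def using R[OF False] by (auto simp: PiE_iff)
      ultimately have "norm (f x) \<le> B" using B by auto
      then show ?thesis by simp
    qed
  qed
qed

lemma gfun_props:
  fixes f :: "(nat \<Rightarrow> 'a::euclidean_space) \<Rightarrow> real"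
  assumes fm: "f \<in> borel_measurable borel" and fb: "\<And>x. \<bar>f x\<bar> \<le> M"
    and uc: "\<And>i. i < l \<Longrightarrow> continuous_on UNIV (u (n - i))"
    and dens: "\<And>i x. i < l \<Longrightarrow> (\<integral>\<^sup>+ y. ennreal (exp (- u (n - i) (x(n - i := y)))) \<partial>lborel) = 1"
  shows "i \<le> l \<Longrightarrow> gfun n u f i \<in> borel_measurable borel \<and> (\<forall>x. \<bar>gfun n u f i x\<bar> \<le> M)"
proof (induction i)
  case 0 then show ?case using fm fb by simp
next
  case (Suc i)
  hence il: "i < l" by simp
  from Suc.IH il have gm: "gfun n u f i \<in> borel_measurable borel" and gb: "\<And>x. \<bar>gfun n u f i x\<bar> \<le> M"
    by auto
  define k where "k = n - i"
  define G where "G = (\<lambda>x y. (gfun n u f i (x(k := y)))\<^sup>2 * exp (- u k (x(k := y))))"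
  have ukm: "u k \<in> borel_measurable borel" unfolding k_def by (rule borel_measurable_continuous_onI[OF uc[OF il]])
  have updm: "(\<lambda>p::(nat \<Rightarrow> 'a) \<times> 'a. (fst p)(k := snd p)) \<in> borel_measurable borel"
    by (rule borel_measurable_continuous_onI[OF cont_upd])
  have m1: "(\<lambda>p::(nat \<Rightarrow> 'a) \<times> 'a. (gfun n u f i ((fst p)(k := snd p)))\<^sup>2 * exp (- u k ((fst p)(k := snd p))))
        \<in> borel_measurable borel"
  proof -
    have em: "(\<lambda>p::(nat \<Rightarrow> 'a) \<times> 'a. exp (- u k ((fst p)(k := snd p)))) \<in> borel_measurable borel"
      by (rule measurable_compose[OF measurable_compose[OF updm ukm] borel_measurable_continuous_onI[of "\<lambda>z. exp (- z)"]])
         (intro continuous_intros)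
    show ?thesis
      by (intro borel_measurable_times borel_measurable_power em measurable_compose[OF updm gm])
  qed
  have "sets (borel \<Otimes>\<^sub>M lborel) = sets (borel \<Otimes>\<^sub>M (borel :: 'a measure))"
    by (rule sets_pair_measure_cong) simp_all
  hence se: "sets (borel \<Otimes>\<^sub>M lborel) = sets (borel :: ((nat \<Rightarrow> 'a) \<times> 'a) measure)"
    by (metis borel_prod)
  have cp: "case_prod G = (\<lambda>p::(nat \<Rightarrow> 'a) \<times> 'a. (gfun n u f i ((fst p)(k := snd p)))\<^sup>2 * exp (- u k ((fst p)(k := snd p))))"
    unfolding G_def by (simp add: fun_eq_iff split_beta)
  have Gm: "case_prod G \<in> borel_measurable (borel \<Otimes>\<^sub>M lborel)"
    unfolding cp measurable_cong_sets[OF se refl] by (rule m1)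
  have meas: "gfun n u f (Suc i) \<in> borel_measurable borel"
  proof -
    have "(\<lambda>x. \<integral>y. G x y \<partial>lborel) \<in> borel_measurable borel"
      by (rule lborel.borel_measurable_lebesgue_integral[OF Gm])
    hence "(\<lambda>x. sqrt (\<integral>y. G x y \<partial>lborel)) \<in> borel_measurable borel" by measurable
    then show ?thesis unfolding G_def k_def by simp
  qed
  have bnd: "\<bar>gfun n u f (Suc i) x\<bar> \<le> M" for x
  proof -
    define w where "w = (\<lambda>y. exp (- u k (x(k := y))))"
    have wm: "w \<in> borel_measurable lborel" unfolding w_def
      using measurable_compose[OF upd_meas ukm] by measurable
    have wi: "integrable lborel w"
      by (rule integrableI_nonneg) (use wm dens[OF il, of x] in \<open>auto simp: w_def k_def\<close>)
    have wint: "(\<integral>y. w y \<partial>lborel) = 1"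
      using integral_eq_nn_integral[OF wm] dens[OF il, of x] by (simp add: w_def k_def)
    have ghm: "(\<lambda>y. gfun n u f i (x(k := y))) \<in> borel_measurable lborel"
      using measurable_compose[OF upd_meas gm] .
    have M0: "0 \<le> M" using gb[of x] by linarith
    have Gi: "integrable lborel (G x)"
    proof (rule Bochner_Integration.integrable_bound)
      show "integrable lborel (\<lambda>y. M\<^sup>2 * w y)" using wi by simp
      show "G x \<in> borel_measurable lborel" unfolding G_def using ghm wm unfolding w_def by measurable
      show "AE y in lborel. norm (G x y) \<le> norm (M\<^sup>2 * w y)"
      proof (intro AE_I2)
        fix y
        have "(gfun n u f i (x(k := y)))\<^sup>2 \<le> M\<^sup>2"
          using power_mono[OF gb[of "x(k := y)"] abs_ge_zero, of 2] by simp
        hence "(gfun n u f i (x(k := y)))\<^sup>2 * w y \<le> M\<^sup>2 * w y" by (intro mult_right_mono) (auto simp: w_def)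
        then show "norm (G x y) \<le> norm (M\<^sup>2 * w y)" by (simp add: G_def w_def)
      qed
    qed
    have "(\<integral>y. G x y \<partial>lborel) \<le> (\<integral>y. M\<^sup>2 * w y \<partial>lborel)"
    proof (rule integral_mono[OF Gi])
      show "integrable lborel (\<lambda>y. M\<^sup>2 * w y)" using wi by simp
      fix y
      have "(gfun n u f i (x(k := y)))\<^sup>2 \<le> M\<^sup>2"
        using power_mono[OF gb[of "x(k := y)"] abs_ge_zero, of 2] by simp
      hence "(gfun n u f i (x(k := y)))\<^sup>2 * w y \<le> M\<^sup>2 * w y" by (intro mult_right_mono) (auto simp: w_def)
      then show "G x y \<le> M\<^sup>2 * w y" by (simp add: G_def w_def)
    qed
    also have "\<dots> = M\<^sup>2" using wint by simp
    finally have up: "(\<integral>y. G x y \<partial>lborel) \<le> M\<^sup>2" .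
    have lo: "0 \<le> (\<integral>y. G x y \<partial>lborel)" unfolding G_def by (intro integral_nonneg_AE AE_I2) simp
    have "sqrt (\<integral>y. G x y \<partial>lborel) \<le> sqrt (M\<^sup>2)" using up by (rule real_sqrt_le_mono)
    hence "sqrt (\<integral>y. G x y \<partial>lborel) \<le> M" using M0 by simp
    moreover have "gfun n u f (Suc i) x = sqrt (\<integral>y. G x y \<partial>lborel)" unfolding G_def k_def by simp
    ultimately show ?thesis using lo by simp
  qed
  show ?case using meas bnd by simp
qed



theorem lemma5p3:
  fixes u :: "nat \<Rightarrow> (nat \<Rightarrow> 'a::euclidean_space) \<Rightarrow> real"
    and du :: "nat \<Rightarrow> nat \<Rightarrow> (nat \<Rightarrow> 'a) \<Rightarrow> 'a"
    and f :: "(nat \<Rightarrow> 'a) \<Rightarrow> real"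
    and n l j :: nat and \<kappa> :: real
  assumes u_dep: "\<And>i. i \<in> {2..n} \<Longrightarrow> depends_only i (u i)"
    and u_deriv: "\<And>i k x. i \<in> {2..n} \<Longrightarrow> k \<in> {1..i} \<Longrightarrow>
           ((\<lambda>y. u i (x(k:=y))) has_derivative (\<lambda>v. du i k x \<bullet> v)) (at (x k))"
    and du_cont: "\<And>i k. i \<in> {2..n} \<Longrightarrow> k \<in> {1..i} \<Longrightarrow> continuous_on UNIV (du i k)"
    and density: "\<And>i x. i \<in> {2..n} \<Longrightarrow>
           (\<integral>\<^sup>+ y. ennreal (exp (- u i (x(i:=y)))) \<partial>lborel) = 1"
    and f_dep: "depends_only n f"
    and f_smooth: "smooth_fun n f"
    and f_supp: "\<exists>R. \<forall>x. f x \<noteq> 0 \<longrightarrow> (\<forall>k\<in>{1..n}. norm (x k) \<le> R)"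
    and lj: "l < j" "j \<le> n - 1"
    and subgauss: "\<And>s. Lambda u du (n - l) (n - j) s \<le> ennreal (exp (\<kappa> * (norm s)\<^sup>2 / 2))"
  shows "norm (\<integral>y. ((gfun n u f l (x(n - l := y)))\<^sup>2 * exp (- u (n - l) (x(n - l := y))))
                   *\<^sub>R du (n - l) (n - j) (x(n - l := y)) \<partial>lborel)
         \<le> gfun n u f (Suc l) x *
           sqrt (2 * \<kappa> * (\<integral>y. (gfun n u f l (x(n - l := y)))\<^sup>2
                    * ln ((gfun n u f l (x(n - l := y)))\<^sup>2 / (gfun n u f (Suc l) x)\<^sup>2)
                    * exp (- u (n - l) (x(n - l := y))) \<partial>lborel))"
proof -
  have ucont: "continuous_on UNIV (u i)" if "i \<in> {2..n}" for i
    by (rule cont_partial[OF u_dep[OF that] u_deriv[OF that] du_cont[OF that]])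
  have fc: "continuous_on UNIV f" using f_smooth by (cases rule: smooth_fun.cases) auto
  obtain M where fb: "\<And>x. \<bar>f x\<bar> \<le> M" using f_bounded[OF fc f_dep f_supp] by blast
  have i0: "n - l \<in> {2..n}" using lj by auto
  have k0: "n - j \<in> {1..n - l}" using lj by auto
  have gp: "gfun n u f l \<in> borel_measurable borel \<and> (\<forall>x. \<bar>gfun n u f l x\<bar> \<le> M)"
  proof (rule gfun_props[OF borel_measurable_continuous_onI[OF fc] fb])
    fix i assume "i < l"
    hence ii: "n - i \<in> {2..n}" using lj by auto
    show "continuous_on UNIV (u (n - i))" by (rule ucont[OF ii])
    fix x show "(\<integral>\<^sup>+ y. ennreal (exp (- u (n - i) (x(n - i := y)))) \<partial>lborel) = 1" by (rule density[OF ii])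
  qed simp
  have gm: "gfun n u f l \<in> borel_measurable borel" and gb: "\<And>x. \<bar>gfun n u f l x\<bar> \<le> M" using gp by auto
  have ukm: "u (n - l) \<in> borel_measurable borel" by (rule borel_measurable_continuous_onI[OF ucont[OF i0]])
  have dkm: "du (n - l) (n - j) \<in> borel_measurable borel" by (rule borel_measurable_continuous_onI[OF du_cont[OF i0 k0]])
  have hm: "(\<lambda>y. (gfun n u f l (x(n - l := y)))\<^sup>2) \<in> borel_measurable lborel"
    using measurable_compose[OF upd_meas gm] by measurable
  have wm: "(\<lambda>y. exp (- u (n - l) (x(n - l := y)))) \<in> borel_measurable lborel"
    using measurable_compose[OF upd_meas ukm] by measurable
  have Vm: "(\<lambda>y. du (n - l) (n - j) (x(n - l := y))) \<in> borel_measurable lborel"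
    using measurable_compose[OF upd_meas dkm] .
  have main: "norm (\<integral>y. ((gfun n u f l (x(n - l := y)))\<^sup>2 * exp (- u (n - l) (x(n - l := y))))
                   *\<^sub>R du (n - l) (n - j) (x(n - l := y)) \<partial>lborel)
         \<le> sqrt (\<integral>y. (gfun n u f l (x(n - l := y)))\<^sup>2 * exp (- u (n - l) (x(n - l := y))) \<partial>lborel) *
           sqrt (2 * \<kappa> * (\<integral>y. (gfun n u f l (x(n - l := y)))\<^sup>2
                    * ln ((gfun n u f l (x(n - l := y)))\<^sup>2 / (sqrt (\<integral>y. (gfun n u f l (x(n - l := y)))\<^sup>2 * exp (- u (n - l) (x(n - l := y))) \<partial>lborel))\<^sup>2)
                    * exp (- u (n - l) (x(n - l := y))) \<partial>lborel))"
  proof (rule main_abs[OF hm _ _ wm _ _ Vm])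
    fix y
    show "0 \<le> (gfun n u f l (x(n - l := y)))\<^sup>2" by simp
    show "(gfun n u f l (x(n - l := y)))\<^sup>2 \<le> M\<^sup>2"
      using power_mono[OF gb[of "x(n - l := y)"] abs_ge_zero, of 2] by simp
    show "0 \<le> exp (- u (n - l) (x(n - l := y)))" by simp
  next
    show "(\<integral>\<^sup>+ y. ennreal (exp (- u (n - l) (x(n - l := y)))) \<partial>lborel) = 1" by (rule density[OF i0])
  next
    fix s :: 'a
    have "(\<integral>\<^sup>+ y. ennreal (exp (s \<bullet> du (n - l) (n - j) (x(n - l := y))) * exp (- u (n - l) (x(n - l := y)))) \<partial>lborel)
          \<le> Lambda u du (n - l) (n - j) s"
      unfolding Lambda_def by (rule SUP_upper) simp
    also have "\<dots> \<le> ennreal (exp (\<kappa> * (norm s)\<^sup>2 / 2))" by (rule subgauss)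
    finally show "(\<integral>\<^sup>+ y. ennreal (exp (s \<bullet> du (n - l) (n - j) (x(n - l := y))) * exp (- u (n - l) (x(n - l := y)))) \<partial>lborel)
          \<le> ennreal (exp (\<kappa> * (norm s)\<^sup>2 / 2))" .
  qed
  have gs: "gfun n u f (Suc l) x = sqrt (\<integral>y. (gfun n u f l (x(n - l := y)))\<^sup>2 * exp (- u (n - l) (x(n - l := y))) \<partial>lborel)"
    by simp
  show ?thesis unfolding gs by (rule main)
qed

end
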